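(* For all $n\ge1$, $u_{2n}(0)=\dfrac{n+1}{2^n}$.
   Context: The rational functions $u_{2n}(a)$ are defined by $(a^2+1)u_2=1$ and, for $n\ge2$, $(a^2+n^2)u_{2n}=3u_{2(n-1)}+3\sum_{j_1+j_2=n-1}u_{2j_1}u_{2j_2}+\sum_{j_1+j_2+j_3=n-1}u_{2j_1}u_{2j_2}u_{2j_3}-\sum_{1\le j_1,\,2j_1<n}(n-2j_1)^2u_{2j_1}u_{2(n-j_1)}$, all indices $j_i\ge1$. They are the Taylor coefficients of the solution of the degenerate third Painlevé equation vanishing at $\tau=0$. *)

theory Defs
  imports Complex_Main
begin

text \<open>u n a stands for the paper's u_{2n}(a), evaluated at a real point a
  (the denominators a^2 + n^2 are positive for n \<ge> 1). The value at n = 0 is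
  an unused convention.\<close>

function u :: "nat \<Rightarrow> real \<Rightarrow> real" where
  "u n a =
    (if n = 0 then 0
     else if n = 1 then 1 / (a^2 + 1)
     else (3 * u (n - 1) a
           + 3 * (\<Sum>(j1, j2) \<in> {(j1, j2). 1 \<le> j1 \<and> 1 \<le> j2 \<and> j1 + j2 = n - 1}.
                    u j1 a * u j2 a)
           + (\<Sum>(j1, j2, j3) \<in> {(j1, j2, j3). 1 \<le> j1 \<and> 1 \<le> j2 \<and> 1 \<le> j3 \<and> j1 + j2 + j3 = n - 1}.
                    u j1 a * u j2 a * u j3 a)
           - (\<Sum>j1 \<in> {j1. 1 \<le> j1 \<and> 2 * j1 < n}.
                    (real n - 2 * real j1)^2 * u j1 a * u (n - j1) a))
          / (a^2 + (real n)^2))"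
  by pat_completeness auto
termination
  by (relation "measure fst") auto

end

theory Submission imports Defs begin

declare u.simps[simp del]


definition p2 :: "real \<Rightarrow> real \<Rightarrow> real" where
 "p2 t x = 5/6*t + 3/2*t*x - 1/2*t^2 + 1/2*t^2*x - 1/3*t^3"
definition p3 :: "real \<Rightarrow> real \<Rightarrow> real" where
 "p3 t x = -73/60*t - 3/2*t*x + 7/6*t*x^2 + 1/4*t*x^3 + 3/8*t^2 - 41/24*t^2*x + 1/12*t^2*x^3
   + 3/4*t^3 - 1/4*t^3*x - 1/6*t^3*x^2 + 1/8*t^4 + 1/8*t^4*x - 1/30*t^5"
definition pc :: "real \<Rightarrow> real \<Rightarrow> real" where
 "pc t x = 4/5*t - 4/3*t*x - 11/6*t*x^2 + 3/2*t*x^3 + 2*t^2 + 2*t^2*x - 9/2*t^2*x^2 + 1/2*t^2*x^3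
   + 16/3*t^3*x - 5/3*t^3*x^2 - 2*t^4 + 2*t^4*x - 4/5*t^5"

lemma S2: "(\<Sum>j\<in>{1..<Suc N}. (real j + 1) * (x - real j + 1)) = p2 (real N) x"
proof (induction N)
  case 0 then show ?case by (simp add: p2_def)
next
  case (Suc N)
  have "(\<Sum>j\<in>{1..<Suc (Suc N)}. (real j + 1) * (x - real j + 1))
     = p2 (real N) x + (real (Suc N) + 1) * (x - real (Suc N) + 1)"
    using Suc by (simp add: sum.atLeastLessThan_Suc)
  also have "\<dots> = p2 (real (Suc N)) x" unfolding p2_def of_nat_Suc by algebra
  finally show ?case .
qed

lemma S3: "(\<Sum>j\<in>{1..<Suc N}. (real j + 1) * p2 (x - real j - 1) (x - real j)) = p3 (real N) x"
proof (induction N)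
  case 0 then show ?case by (simp add: p3_def)
next
  case (Suc N)
  have "(\<Sum>j\<in>{1..<Suc (Suc N)}. (real j + 1) * p2 (x - real j - 1) (x - real j))
     = p3 (real N) x + (real (Suc N) + 1) * p2 (x - real (Suc N) - 1) (x - real (Suc N))"
    using Suc by (simp add: sum.atLeastLessThan_Suc)
  also have "\<dots> = p3 (real (Suc N)) x" unfolding p2_def p3_def of_nat_Suc by algebra
  finally show ?case .
qed

lemma SC: "(\<Sum>j\<in>{1..<Suc N}. (x - 2 * real j)^2 * ((real j + 1) * (x - real j + 1))) = pc (real N) x"
proof (induction N)
  case 0 then show ?case by (simp add: pc_def)
next
  case (Suc N)
  have "(\<Sum>j\<in>{1..<Suc (Suc N)}. (x - 2 * real j)^2 * ((real j + 1) * (x - real j + 1)))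
     = pc (real N) x + (x - 2 * real (Suc N))^2 * ((real (Suc N) + 1) * (x - real (Suc N) + 1))"
    using Suc by (simp add: sum.atLeastLessThan_Suc)
  also have "\<dots> = pc (real (Suc N)) x" unfolding pc_def of_nat_Suc by algebra
  finally show ?case .
qed

lemma final_modd: "(k::real) \<ge> 0 \<Longrightarrow> (2*k+2)^2*(2*k+3) = 6*(2*k+2) + 6 * p2 (2*k) (2*k+1) + 2 * p3 (2*k) (2*k+1) - pc k (2*k+2)"
  unfolding p2_def p3_def pc_def by algebra
lemma final_meven: "(k::real) \<ge> 0 \<Longrightarrow> (2*k+1)^2*(2*k+2) = 6*(2*k+1) + 6 * p2 (2*k-1) (2*k) + 2 * p3 (2*k-1) (2*k) - pc k (2*k+1)"
  unfolding p2_def p3_def pc_def by algebra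

lemma sum_pair:
  "(\<Sum>(j1, j2) \<in> {(j1, j2). 1 \<le> j1 \<and> 1 \<le> j2 \<and> j1 + j2 = (M::nat)}. g j1 j2)
   = (\<Sum>j\<in>{1..<M}. g j (M - j))"
proof -
  have e: "{(j1, j2). 1 \<le> j1 \<and> 1 \<le> j2 \<and> j1 + j2 = M} = (\<lambda>j. (j, M - j)) ` {1..<M}"
    by (auto simp: image_iff)
  have i: "inj_on (\<lambda>j. (j, M - j)) {1..<M}" by (auto simp: inj_on_def)
  show ?thesis unfolding e using sum.reindex[OF i, of "\<lambda>(j1,j2). g j1 j2"] by (simp add: o_def)
qed

lemma sum_trip:
  "(\<Sum>(j1, j2, j3) \<in> {(j1, j2, j3). 1 \<le> j1 \<and> 1 \<le> j2 \<and> 1 \<le> j3 \<and> j1 + j2 + j3 = (M::nat)}. g j1 j2 j3)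
   = (\<Sum>j1\<in>{1..<M}. \<Sum>j2\<in>{1..<M - j1}. g j1 j2 (M - j1 - j2))"
proof -
  have e: "{(j1, j2, j3). 1 \<le> j1 \<and> 1 \<le> j2 \<and> 1 \<le> j3 \<and> j1 + j2 + j3 = M}
     = Sigma {1..<M} (\<lambda>j1. {(j2, j3). 1 \<le> j2 \<and> 1 \<le> j3 \<and> j2 + j3 = M - j1})"
    by auto
  have "(\<Sum>(j1, j2, j3) \<in> Sigma {1..<M} (\<lambda>j1. {(j2, j3). 1 \<le> j2 \<and> 1 \<le> j3 \<and> j2 + j3 = M - j1}). g j1 j2 j3)
      = (\<Sum>j1\<in>{1..<M}. \<Sum>(j2, j3) \<in> {(j2, j3). 1 \<le> j2 \<and> 1 \<le> j3 \<and> j2 + j3 = M - j1}. g j1 j2 j3)"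
  proof (rule sum.Sigma[symmetric])
    show "finite {1..<M}" by simp
    show "\<forall>x\<in>{1..<M}. finite {(j2, j3). 1 \<le> j2 \<and> 1 \<le> j3 \<and> j2 + j3 = M - x}"
    proof
      fix x
      have "{(j2, j3). 1 \<le> j2 \<and> 1 \<le> j3 \<and> j2 + j3 = M - x} \<subseteq> {..M} \<times> {..M}" by auto
      then show "finite {(j2, j3). 1 \<le> j2 \<and> 1 \<le> j3 \<and> j2 + j3 = M - x}"
        by (rule finite_subset) simp
    qed
  qed
  also have "\<dots> = (\<Sum>j1\<in>{1..<M}. \<Sum>j2\<in>{1..<M - j1}. g j1 j2 (M - j1 - j2))"
    by (intro sum.cong refl) (subst sum_pair, simp add: diff_diff_add)
  finally show ?thesis unfolding e .
qed

definition w :: "nat \<Rightarrow> real" where "w j = real (j + 1) / 2 ^ j"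

lemma ww: "j \<le> m \<Longrightarrow> w j * w (m - j) = (real j + 1) * (real m - real j + 1) / 2 ^ m"
proof -
  assume "j \<le> m"
  then have p: "(2::real) ^ m = 2 ^ j * 2 ^ (m - j)" by (simp add: power_add[symmetric])
  show ?thesis unfolding w_def p using \<open>j \<le> m\<close> by (simp add: of_nat_diff field_simps)
qed

lemma www: "j1 + j2 \<le> m \<Longrightarrow> w j1 * w j2 * w (m - j1 - j2)
   = (real j1 + 1) * ((real j2 + 1) * ((real m - real j1) - real j2 + 1)) / 2 ^ m"
proof -
  assume a: "j1 + j2 \<le> m"
  then have p: "(2::real) ^ m = 2 ^ j1 * 2 ^ j2 * 2 ^ (m - j1 - j2)" by (simp add: power_add[symmetric])
  show ?thesis unfolding w_def p using a by (simp add: of_nat_diff field_simps)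
qed

lemma fin_alg:
  fixes B N M P2 P3 PC :: real
  assumes "B > 0" "N > 0" "N = M + 1" "N^2 * (N + 1) = 6*(M+1) + 6*P2 + 2*P3 - PC"
  shows "(3 * ((M + 1) / B) + 3 * (P2 / B) + P3 / B - PC / (2 * B)) / N^2 = (N + 1) / (2 * B)"
proof -
  have "(3 * ((M + 1) / B) + 3 * (P2 / B) + P3 / B - PC / (2 * B)) = (6*(M+1) + 6*P2 + 2*P3 - PC) / (2*B)"
    using assms(1) by (simp add: field_simps)
  also have "\<dots> = N^2 * (N + 1) / (2 * B)" using assms(4) by simp
  finally show ?thesis using assms(1,2) by (simp add: field_simps)
qed

lemma main: "1 \<le> n \<Longrightarrow> u n 0 = w n"
proof (induction n rule: less_induct)
  case (less n)
  show ?case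
  proof (cases "n = 1")
    case True
    then show ?thesis using u.simps[of 1 0] by (simp add: w_def)
  next
    case False
    with less.prems obtain m where nm: "n = Suc m" and m1: "1 \<le> m"
      by (metis Suc_le_D Suc_le_mono le_antisym not_less_eq_eq)
    obtain m' where mm: "m = Suc m'" using m1 by (cases m) auto
    have IH: "\<And>j. 1 \<le> j \<Longrightarrow> j < n \<Longrightarrow> u j 0 = w j" using less.IH by blast
    have nn0: "(n = 0) = False" and nn1: "(n = 1) = False" using False nm by auto
    have rec: "u n 0 =
     (3 * u (n - 1) 0
           + 3 * (\<Sum>(j1, j2) \<in> {(j1, j2). 1 \<le> j1 \<and> 1 \<le> j2 \<and> j1 + j2 = n - 1}.
                    u j1 0 * u j2 0)
           + (\<Sum>(j1, j2, j3) \<in> {(j1, j2, j3). 1 \<le> j1 \<and> 1 \<le> j2 \<and> 1 \<le> j3 \<and> j1 + j2 + j3 = n - 1}.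
                    u j1 0 * u j2 0 * u j3 0)
           - (\<Sum>j1 \<in> {j1. 1 \<le> j1 \<and> 2 * j1 < n}.
                    (real n - 2 * real j1)^2 * u j1 0 * u (n - j1) 0))
          / (0^2 + (real n)^2)"
      using u.simps[of n 0] by (simp only: nn0 nn1 if_False)
    have nm1: "n - 1 = m" using nm by simp
    have SP: "(\<Sum>(j1, j2) \<in> {(j1, j2). 1 \<le> j1 \<and> 1 \<le> j2 \<and> j1 + j2 = n - 1}. u j1 0 * u j2 0)
       = p2 (real m - 1) (real m) / 2 ^ m"
    proof -
      have "(\<Sum>(j1, j2) \<in> {(j1, j2). 1 \<le> j1 \<and> 1 \<le> j2 \<and> j1 + j2 = n - 1}. u j1 0 * u j2 0)
          = (\<Sum>j\<in>{1..<m}. u j 0 * u (m - j) 0)" unfolding nm1 by (rule sum_pair)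
      also have "\<dots> = (\<Sum>j\<in>{1..<m}. (real j + 1) * (real m - real j + 1) / 2 ^ m)"
      proof (rule sum.cong[OF refl])
        fix j assume "j \<in> {1..<m}"
        then have a: "1 \<le> j" "j < n" "1 \<le> m - j" "m - j < n" "j \<le> m" using nm by auto
        show "u j 0 * u (m - j) 0 = (real j + 1) * (real m - real j + 1) / 2 ^ m"
          using IH[OF a(1,2)] IH[OF a(3,4)] ww[OF a(5)] by simp
      qed
      also have "\<dots> = p2 (real m - 1) (real m) / 2 ^ m"
        unfolding sum_divide_distrib[symmetric] mm S2 by simp
      finally show ?thesis .
    qed
    have ST: "(\<Sum>(j1, j2, j3) \<in> {(j1, j2, j3). 1 \<le> j1 \<and> 1 \<le> j2 \<and> 1 \<le> j3 \<and> j1 + j2 + j3 = n - 1}.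
                    u j1 0 * u j2 0 * u j3 0) = p3 (real m - 1) (real m) / 2 ^ m"
    proof -
      have "(\<Sum>(j1, j2, j3) \<in> {(j1, j2, j3). 1 \<le> j1 \<and> 1 \<le> j2 \<and> 1 \<le> j3 \<and> j1 + j2 + j3 = n - 1}.
                    u j1 0 * u j2 0 * u j3 0)
          = (\<Sum>j1\<in>{1..<m}. \<Sum>j2\<in>{1..<m - j1}. u j1 0 * u j2 0 * u (m - j1 - j2) 0)"
        unfolding nm1 by (rule sum_trip)
      also have "\<dots> = (\<Sum>j1\<in>{1..<m}. (real j1 + 1) * p2 (real m - real j1 - 1) (real m - real j1) / 2 ^ m)"
      proof (rule sum.cong[OF refl])
        fix j1 assume j1: "j1 \<in> {1..<m}"
        have "(\<Sum>j2\<in>{1..<m - j1}. u j1 0 * u j2 0 * u (m - j1 - j2) 0)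
            = (\<Sum>j2\<in>{1..<m - j1}. (real j1 + 1) * ((real j2 + 1) * ((real m - real j1) - real j2 + 1)) / 2 ^ m)"
        proof (rule sum.cong[OF refl])
          fix j2 assume j2: "j2 \<in> {1..<m - j1}"
          then have a: "1 \<le> j1" "j1 < n" "1 \<le> j2" "j2 < n" "1 \<le> m - j1 - j2" "m - j1 - j2 < n" "j1 + j2 \<le> m"
            using j1 nm by auto
          show "u j1 0 * u j2 0 * u (m - j1 - j2) 0
              = (real j1 + 1) * ((real j2 + 1) * ((real m - real j1) - real j2 + 1)) / 2 ^ m"
            using IH[OF a(1,2)] IH[OF a(3,4)] IH[OF a(5,6)] www[OF a(7)] by simp
        qed
        also have "\<dots> = (real j1 + 1) * (\<Sum>j2\<in>{1..<Suc (m - j1 - 1)}. (real j2 + 1) * ((real m - real j1) - real j2 + 1)) / 2 ^ m"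
          using j1 by (simp add: sum_divide_distrib[symmetric] sum_distrib_left Suc_diff_Suc)
        also have "\<dots> = (real j1 + 1) * p2 (real m - real j1 - 1) (real m - real j1) / 2 ^ m"
          unfolding S2 using j1 by (simp add: of_nat_diff diff_diff_eq add.commute)
        finally show "(\<Sum>j2\<in>{1..<m - j1}. u j1 0 * u j2 0 * u (m - j1 - j2) 0)
            = (real j1 + 1) * p2 (real m - real j1 - 1) (real m - real j1) / 2 ^ m" .
      qed
      also have "\<dots> = p3 (real m - 1) (real m) / 2 ^ m"
        unfolding sum_divide_distrib[symmetric] mm S3 by simp
      finally show ?thesis .
    qed
    have setC: "{j1. 1 \<le> j1 \<and> 2 * j1 < n} = {1..<Suc (m div 2)}" using nm by auto
    have SC: "(\<Sum>j1 \<in> {j1. 1 \<le> j1 \<and> 2 * j1 < n}. (real n - 2 * real j1)^2 * u j1 0 * u (n - j1) 0)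
       = pc (real (m div 2)) (real n) / 2 ^ n"
    proof -
      have "(\<Sum>j1 \<in> {j1. 1 \<le> j1 \<and> 2 * j1 < n}. (real n - 2 * real j1)^2 * u j1 0 * u (n - j1) 0)
          = (\<Sum>j\<in>{1..<Suc (m div 2)}. (real n - 2 * real j)^2 * ((real j + 1) * (real n - real j + 1)) / 2 ^ n)"
        unfolding setC
      proof (rule sum.cong[OF refl])
        fix j assume j: "j \<in> {1..<Suc (m div 2)}"
        then have a: "1 \<le> j" "j < n" "1 \<le> n - j" "n - j < n" "j \<le> n" using nm by auto
        have "(real n - 2 * real j)^2 * u j 0 * u (n - j) 0 = (real n - 2 * real j)^2 * (w j * w (n - j))"
          using IH[OF a(1,2)] IH[OF a(3,4)] by simp
        then show "(real n - 2 * real j)^2 * u j 0 * u (n - j) 0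
           = (real n - 2 * real j)^2 * ((real j + 1) * (real n - real j + 1)) / 2 ^ n"
          using ww[OF a(5)] by simp
      qed
      also have "\<dots> = pc (real (m div 2)) (real n) / 2 ^ n"
        unfolding sum_divide_distrib[symmetric] SC by simp
      finally show ?thesis .
    qed
    have um: "u (n - 1) 0 = (real m + 1) / 2 ^ m" using IH[of m] m1 nm by (simp add: w_def)
    have "u n 0 = (3 * ((real m + 1) / 2 ^ m) + 3 * (p2 (real m - 1) (real m) / 2 ^ m)
          + p3 (real m - 1) (real m) / 2 ^ m - pc (real (m div 2)) (real n) / (2 * 2 ^ m)) / (real n)^2"
      unfolding rec SP ST SC um using nm by simp
    also have "\<dots> = (real n + 1) / (2 * 2 ^ m)"
    proof (rule fin_alg)
      show "(real n)^2 * (real n + 1) = 6 * (real m + 1) + 6 * p2 (real m - 1) (real m)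
         + 2 * p3 (real m - 1) (real m) - pc (real (m div 2)) (real n)"
      proof (cases "even m")
        case True
        then obtain k where k: "m = 2 * k" by blast
        show ?thesis using final_meven[of "real k"] k nm by (simp add: ac_simps)
      next
        case False
        then obtain k where k: "m = 2 * k + 1" using oddE by blast
        show ?thesis using final_modd[of "real k"] k nm by (simp add: ac_simps)
      qed
    qed (use nm in auto)
    also have "\<dots> = w n" using nm by (simp add: w_def)
    finally show ?thesis .
  qed
qed

theorem proposition10:
  fixes n :: nat
  assumes "n \<ge> 1"
  shows "u n 0 = real (n + 1) / 2 ^ n"
  using main[OF assms] by (simp add: w_def)

end
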